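(* For all natural numbers $n\geq 1$, \[a_4(n)=4p(n)-p(n+1)-2p(n+2)-2p(n+3)+p(n+4)+2p(n+5)-p(n+6).\]
   Context: $p(n)$ denotes the number of partitions of $n$. $a_4(n)$ denotes the number of partitions of $n$ in which the smallest part occurs at least $4$ times. *)

theory Defs
  imports Main "HOL-Library.Multiset"
begin

definition partitions :: "nat \<Rightarrow> nat multiset set" where
  "partitions n = {P. (\<forall>k \<in># P. 0 < k) \<and> sum_mset P = n}"

definition p :: "nat \<Rightarrow> nat" where
  "p n = card (partitions n)"

definition a4 :: "nat \<Rightarrow> nat" where
  "a4 n = card {P \<in> partitions n. P \<noteq> {#} \<and> count P (Min_mset P) \<ge> 4}"

end

theory Submission imports Defs begin

lemma size_le_sum: "(\<forall>k \<in># P. 0 < (k::nat)) \<Longrightarrow> size P \<le> sum_mset P"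
proof (induction P)
  case empty then show ?case by simp
next
  case (add x P) then show ?case by auto
qed

lemma mem_le_sum: "(x::nat) \<in># P \<Longrightarrow> x \<le> sum_mset P"
  by (metis le_add1 multi_member_split sum_mset.add_mset)

lemma finite_partitions: "finite (partitions n)"
proof -
  have "partitions n \<subseteq> mset ` {xs. set xs \<subseteq> {0..n} \<and> length xs \<le> n}"
  proof
    fix P assume P: "P \<in> partitions n"
    hence pos: "\<forall>k \<in># P. 0 < k" and s: "sum_mset P = n" by (auto simp: partitions_def)
    have "size P \<le> n" using size_le_sum[OF pos] s by simp
    moreover have "set_mset P \<subseteq> {0..n}"
    proof
      fix x assume "x \<in># P"
      hence "x \<le> sum_mset P" by (rule mem_le_sum)
      thus "x \<in> {0..n}" using s by simp
    qed
    ultimately show "P \<in> mset ` {xs. set xs \<subseteq> {0..n} \<and> length xs \<le> n}"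
      by (metis (mono_tags, lifting) ex_mset mem_Collect_eq set_mset_mset size_mset image_eqI)
  qed
  moreover have "finite {xs. set xs \<subseteq> {0..n} \<and> length xs \<le> (n::nat)}"
    by (rule finite_lists_length_le) simp
  ultimately show ?thesis using finite_subset by blast
qed

definition Qset :: "nat \<Rightarrow> nat \<Rightarrow> nat multiset set" where
  "Qset m x = {P \<in> partitions x. \<forall>y \<in># P. m \<le> y}"

definition Q :: "nat \<Rightarrow> nat \<Rightarrow> nat" where "Q m x = card (Qset m x)"

lemma finite_Qset: "finite (Qset m x)"
  unfolding Qset_def using finite_partitions by auto

lemma Q_rec:
  assumes "m \<ge> 1"
  shows "Q m x = Q (Suc m) x + (if m \<le> x then Q m (x - m) else 0)"
proof -
  have split: "Qset m x = Qset (Suc m) x \<union> {P \<in> Qset m x. m \<in># P}"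
    unfolding Qset_def by (auto simp: Suc_le_eq order_le_less)
  have disj: "Qset (Suc m) x \<inter> {P \<in> Qset m x. m \<in># P} = {}"
    unfolding Qset_def by fastforce
  have img: "{P \<in> Qset m x. m \<in># P} = (if m \<le> x then add_mset m ` Qset m (x - m) else {})"
  proof (cases "m \<le> x")
    case True
    have "{P \<in> Qset m x. m \<in># P} = add_mset m ` Qset m (x - m)"
    proof safe
      fix P assume P: "P \<in> Qset m x" "m \<in># P"
      then obtain R where R: "P = add_mset m R" by (metis multi_member_split)
      have "R \<in> Qset m (x - m)" using P assms unfolding R Qset_def partitions_def by auto
      thus "P \<in> add_mset m ` Qset m (x - m)" using R by blast
    next
      fix R assume "R \<in> Qset m (x - m)"
      thus "add_mset m R \<in> Qset m x" using assms True unfolding Qset_def partitions_def by auto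
    qed auto
    thus ?thesis using True by simp
  next
    case False
    have "{P \<in> Qset m x. m \<in># P} = {}"
    proof (rule ccontr)
      assume "{P \<in> Qset m x. m \<in># P} \<noteq> {}"
      then obtain P where "P \<in> Qset m x" "m \<in># P" by blast
      hence "m \<le> sum_mset P" "sum_mset P = x" unfolding Qset_def partitions_def
        by (auto simp: mem_le_sum)
      thus False using False by simp
    qed
    thus ?thesis using False by simp
  qed
  have "Q m x = card (Qset (Suc m) x) + card {P \<in> Qset m x. m \<in># P}"
    unfolding Q_def using split disj finite_Qset
    by (metis (no_types, lifting) card_Un_disjoint finite_Un)
  also have "card {P \<in> Qset m x. m \<in># P} = (if m \<le> x then Q m (x - m) else 0)"
    unfolding img Q_def by (auto intro!: card_image simp: inj_on_def)
  finally show ?thesis unfolding Q_def by simp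
qed


definition Bset :: "nat \<Rightarrow> nat \<Rightarrow> nat \<Rightarrow> nat multiset set" where
  "Bset k n m = {P \<in> partitions n. P \<noteq> {#} \<and> Min_mset P = m \<and> k \<le> count P m}"

lemma card_Bset:
  assumes k: "k \<ge> 1" and m: "m \<ge> 1"
  shows "card (Bset k n m) = (if k * m \<le> n then Q m (n - k * m) else 0)"
proof (cases "k * m \<le> n")
  case True
  have "Bset k n m = (\<lambda>R. R + replicate_mset k m) ` Qset m (n - k * m)"
  proof safe
    fix P assume P: "P \<in> Bset k n m"
    hence Pp: "P \<in> partitions n" "P \<noteq> {#}" "Min_mset P = m" "k \<le> count P m"
      unfolding Bset_def by auto
    have sub: "replicate_mset k m \<subseteq># P" using Pp(4)
      by (simp add: subseteq_mset_def count_replicate_mset)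
    define R where "R = P - replicate_mset k m"
    have PR: "P = R + replicate_mset k m" unfolding R_def using sub
      by (simp add: subset_mset.diff_add)
    have "sum_mset P = sum_mset R + k * m" by (subst PR) (simp add: sum_mset_replicate_mset)
    hence sR: "sum_mset R = n - k * m" using Pp(1) unfolding partitions_def by auto
    have "\<forall>y \<in># R. m \<le> y"
    proof
      fix y assume "y \<in># R"
      hence "y \<in># P" unfolding R_def by (meson in_diffD)
      thus "m \<le> y" using Pp(3) by auto
    qed
    moreover have "\<forall>y \<in># R. 0 < y" using calculation m by auto
    ultimately have "R \<in> Qset m (n - k * m)" unfolding Qset_def partitions_def using sR by auto
    thus "P \<in> (\<lambda>R. R + replicate_mset k m) ` Qset m (n - k * m)" using PR by blast
  next
    fix R assume R: "R \<in> Qset m (n - k * m)"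
    hence Rp: "\<forall>y \<in># R. m \<le> y" "sum_mset R = n - k * m" unfolding Qset_def partitions_def by auto
    let ?P = "R + replicate_mset k m"
    have mem: "m \<in># ?P" using k by simp
    have ne: "?P \<noteq> {#}"
    proof
      assume "?P = {#}"
      hence "\<not> m \<in># ?P" by (simp only: set_mset_empty empty_iff not_False_eq_True)
      thus False using mem by blast
    qed
    have "Min_mset ?P = m"
    proof (rule antisym)
      show "Min_mset ?P \<le> m" using mem by simp
      show "m \<le> Min_mset ?P" using ne Rp(1) by (auto intro!: Min.boundedI)
    qed
    moreover have "\<forall>y \<in># ?P. 0 < y"
    proof
      fix y assume "y \<in># ?P"
      hence "y \<in># R \<or> y = m" by (auto split: if_splits)
      thus "0 < y" using Rp(1) m by auto
    qed
    moreover have "sum_mset ?P = n" using Rp(2) True by (simp add: sum_mset_replicate_mset)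
    moreover have "k \<le> count ?P m" by simp
    ultimately have "?P \<in> partitions n \<and> ?P \<noteq> {#} \<and> Min_mset ?P = m \<and> k \<le> count ?P m"
      using ne unfolding partitions_def by blast
    thus "?P \<in> Bset k n m" unfolding Bset_def by blast
  qed
  moreover have "inj_on (\<lambda>R. R + replicate_mset k m) (Qset m (n - k * m))"
    by (auto simp: inj_on_def)
  ultimately show ?thesis using True unfolding Q_def by (simp add: card_image)
next
  case False
  have "Bset k n m = {}"
  proof (rule ccontr)
    assume "Bset k n m \<noteq> {}"
    then obtain P where P: "P \<in> partitions n" "k \<le> count P m" unfolding Bset_def by auto
    have sub: "replicate_mset k m \<subseteq># P" using P(2)
      by (simp add: subseteq_mset_def count_replicate_mset)
    have "sum_mset (replicate_mset k m) \<le> sum_mset P"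
      using sub by (metis le_add1 subset_mset.add_diff_inverse sum_mset.union)
    hence "k * m \<le> n" using P(1) unfolding partitions_def by (simp add: sum_mset_replicate_mset mult.commute)
    thus False using False by simp
  qed
  thus ?thesis using False by simp
qed

definition A :: "nat \<Rightarrow> nat \<Rightarrow> nat" where
  "A k n = card {P \<in> partitions n. P \<noteq> {#} \<and> count P (Min_mset P) \<ge> k}"

lemma A_sum:
  assumes k: "k \<ge> 1"
  shows "A k n = (\<Sum>m\<in>{1..n}. if k * m \<le> n then Q m (n - k * m) else 0)"
proof -
  have eq: "{P \<in> partitions n. P \<noteq> {#} \<and> count P (Min_mset P) \<ge> k} = (\<Union>m\<in>{1..n}. Bset k n m)"
  proof safe
    fix P assume P: "P \<in> partitions n" "P \<noteq> {#}" "k \<le> count P (Min_mset P)"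
    have inP: "Min_mset P \<in># P" using P(2) by simp
    hence "0 < Min_mset P" using P(1) unfolding partitions_def by auto
    moreover have "Min_mset P \<le> n" using inP P(1) mem_le_sum unfolding partitions_def by auto
    ultimately show "P \<in> (\<Union>m\<in>{1..n}. Bset k n m)" using P unfolding Bset_def by auto
  qed (auto simp: Bset_def)
  have "A k n = (\<Sum>m\<in>{1..n}. card (Bset k n m))"
    unfolding A_def eq
    by (rule card_UN_disjoint) (auto simp: Bset_def intro: finite_subset[OF _ finite_partitions])
  also have "\<dots> = (\<Sum>m\<in>{1..n}. if k * m \<le> n then Q m (n - k * m) else 0)"
    proof (rule sum.cong)
    fix m assume "m \<in> {1..n}"
    hence "m \<ge> 1" by simp
    from card_Bset[OF k this, of n] show "card (Bset k n m) = (if k * m \<le> n then Q m (n - k * m) else 0)" .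
  qed simp
  finally show ?thesis .
qed


definition Qi :: "nat \<Rightarrow> int \<Rightarrow> int" where
  "Qi m x = (if x < 0 then 0 else int (Q m (nat x)))"

lemma Qi_rec:
  assumes "m \<ge> 1"
  shows "Qi m x = Qi (Suc m) x + Qi m (x - int m)"
proof (cases "x < 0")
  case True thus ?thesis by (simp add: Qi_def)
next
  case False
  hence x: "x = int (nat x)" by simp
  show ?thesis using Q_rec[OF assms, of "nat x"] False
    by (auto simp: Qi_def nat_diff_distrib)
qed

definition S :: "nat \<Rightarrow> int \<Rightarrow> int" where
  "S k x = (\<Sum>m=1..nat x. Qi m (x - int k * int m))"

lemma S_ext:
  assumes k: "k \<ge> 1" and N: "nat x \<le> N"
  shows "S k x = (\<Sum>m=1..N. Qi m (x - int k * int m))"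
  unfolding S_def
proof (rule sum.mono_neutral_left)
  show "\<forall>i\<in>{1..N} - {1..nat x}. Qi i (x - int k * int i) = 0"
  proof
    fix i assume "i \<in> {1..N} - {1..nat x}"
    hence "int i > x" "i \<ge> 1" by auto
    hence "x - int k * int i < 0" using k
      by (smt (verit, best) mult_le_cancel_right1 of_nat_1 of_nat_le_iff)
    thus "Qi i (x - int k * int i) = 0" by (simp add: Qi_def)
  qed
qed (use N in auto)

lemma S_rec:
  assumes j: "j \<ge> 1" and n: "n \<ge> 0"
  shows "S j n = S j (n + int j) - Qi 1 n + S (Suc j) n"
proof -
  define N where "N = nat n + j"
  have "S j n = (\<Sum>m=1..N. Qi m (n - int j * int m))"
    by (rule S_ext[OF j]) (simp add: N_def)
  also have "\<dots> = (\<Sum>m=1..N. Qi (Suc m) (n - int j * int m) + Qi m (n - int (Suc j) * int m))"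
  proof (rule sum.cong)
    fix m assume "m \<in> {1..N}"
    hence m: "m \<ge> 1" by simp
    have eq: "n - int j * int m - int m = n - int (Suc j) * int m" by (simp add: algebra_simps)
    have "Qi m (n - int j * int m) = Qi (Suc m) (n - int j * int m) + Qi m (n - int j * int m - int m)"
      by (rule Qi_rec[OF m])
    thus "Qi m (n - int j * int m) = Qi (Suc m) (n - int j * int m) + Qi m (n - int (Suc j) * int m)"
      unfolding eq .
  qed simp
  also have "\<dots> = (\<Sum>m=1..N. Qi (Suc m) (n - int j * int m)) + S (Suc j) n"
    by (simp add: sum.distrib S_ext[of "Suc j" n N] N_def)
  also have "(\<Sum>m=1..N. Qi (Suc m) (n - int j * int m)) = (\<Sum>m=Suc 1..Suc N. Qi m ((n + int j) - int j * int m))"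
    by (subst sum.shift_bounds_cl_Suc_ivl) (simp add: algebra_simps)
  also have "\<dots> = (\<Sum>m=1..Suc N. Qi m ((n + int j) - int j * int m)) - Qi 1 n"
    by (subst sum.atLeast_Suc_atMost[of 1 "Suc N"]) auto
  also have "(\<Sum>m=1..Suc N. Qi m ((n + int j) - int j * int m)) = S j (n + int j)"
    by (rule S_ext[symmetric, OF j]) (use n in \<open>simp add: N_def\<close>)
  finally show ?thesis by simp
qed

lemma A_S:
  assumes k: "k \<ge> 1"
  shows "int (A k n) = S k (int n)"
proof -
  have "int (A k n) = (\<Sum>m\<in>{1..n}. int (if k * m \<le> n then Q m (n - k * m) else 0))"
    by (simp add: A_sum[OF k])
  also have "\<dots> = S k (int n)" unfolding S_def
  proof (rule sum.cong)
    fix m assume "m \<in> {1..nat (int n)}"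
    show "int (if k * m \<le> n then Q m (n - k * m) else 0) = Qi m (int n - int k * int m)"
    proof (cases "k * m \<le> n")
      case True
      hence "int n - int k * int m = int (n - k * m)" by (simp add: of_nat_diff)
      thus ?thesis using True by (simp add: Qi_def del: of_nat_diff)
    next
      case False
      hence "int n - int k * int m < 0" by (simp add: of_nat_mult[symmetric] del: of_nat_mult)
      thus ?thesis using False by (simp add: Qi_def)
    qed
  qed simp
  finally show ?thesis .
qed

lemma Q1: "Q 1 n = p n"
proof -
  have "Qset 1 n = partitions n" by (auto simp: Qset_def partitions_def Suc_le_eq)
  thus ?thesis unfolding Q_def p_def by simp
qed

lemma Qi1: "Qi 1 (int n) = int (p n)"
  unfolding Qi_def using Q1[of n] by simp

lemma A1: assumes n: "n \<ge> 1" shows "A 1 n = p n"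
proof -
  have "{P \<in> partitions n. P \<noteq> {#} \<and> count P (Min_mset P) \<ge> 1} = partitions n"
  proof -
    have ne: "\<And>P. P \<in> partitions n \<Longrightarrow> P \<noteq> {#}" using n by (auto simp: partitions_def)
    have c: "\<And>P::nat multiset. P \<noteq> {#} \<Longrightarrow> 1 \<le> count P (Min_mset P)"
    proof -
      fix P :: "nat multiset" assume "P \<noteq> {#}"
      hence "Min_mset P \<in># P" by simp
      thus "1 \<le> count P (Min_mset P)" by (simp add: Suc_le_eq)
    qed
    show ?thesis using ne c by blast
  qed
  thus ?thesis unfolding A_def p_def by simp
qed

lemma S1: "n \<ge> 1 \<Longrightarrow> S 1 (int n) = int (p n)"
  using A_S[of 1 n] A1 by simp

lemma a4_A: "a4 n = A 4 n"
  unfolding a4_def A_def by simp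

theorem theorem1p5:
  fixes n :: nat
  assumes "n \<ge> 1"
  shows "int (a4 n) = 4 * int (p n) - int (p (n+1)) - 2 * int (p (n+2)) - 2 * int (p (n+3))
           + int (p (n+4)) + 2 * int (p (n+5)) - int (p (n+6))"
proof -
  have R: "S j (int m) = S j (int (m + j)) - int (p m) + S (Suc j) (int m)" if "j \<ge> 1" for j m
    using S_rec[OF that, of "int m"] Qi1[of m] by simp
  have s1: "\<And>m. m \<ge> 1 \<Longrightarrow> S 1 (int m) = int (p m)" by (rule S1)
  have a: "int (a4 n) = S 4 (int n)" using A_S[of 4 n] a4_A by simp
  have e4: "S 4 (int n) = S 3 (int n) + int (p n) - S 3 (int (n+3))" using R[of 3 n] by simp
  have e3a: "S 3 (int n) = S 2 (int n) + int (p n) - S 2 (int (n+2))" using R[of 2 n] by simp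
  have e3b: "S 3 (int (n+3)) = S 2 (int (n+3)) + int (p (n+3)) - S 2 (int (n+5))" using R[of 2 "n+3"] by (simp add: ac_simps)
  have e2: "S 2 (int m) = S 1 (int m) + int (p m) - S 1 (int (m+1))" for m using R[of 1 m] by (simp add: numeral_2_eq_2 ac_simps)
  show ?thesis
    using a e4 e3a e3b e2[of n] e2[of "n+2"] e2[of "n+3"] e2[of "n+5"]
      s1[of n] s1[of "n+1"] s1[of "n+2"] s1[of "n+3"] s1[of "n+4"] s1[of "n+5"] s1[of "n+6"] assms
    by (simp add: numeral_eq_Suc)
qed

end
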